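(* Let $(f_m)$ be a frame in $H=\mathcal{L}^2(I)$ with frame bounds $A,B>0$. For each $m$ let $\alpha^m=(\alpha^m_1,\dots,\alpha^m_N)\in(\mathcal{L}^\infty(I))^N$ be scale functions with $\Lambda_m:=\max\{\|\alpha^m_n\|_\infty: n=1,\dots,N\}<1$, and let $f_m*_{T_m}0$ denote the fractal convolution of $f_m$ with the null function with respect to $\alpha^m$. Suppose $$R:=\sum_m\left(\frac{\Lambda_m}{1-\Lambda_m}\right)^2\|f_m\|_2^2<A.$$ Then $(f_m*_{T_m}0)$ is a frame in $H$ with frame bounds $A\left(1-\sqrt{R/A}\right)^2$ and $B\left(1+\sqrt{R/B}\right)^2$.
   Context: Let $N\ge 2$, $I=[x_0,x_N]$, $\Delta: x_0<\dots<x_N$ a fixed partition, $L_n(x)=a_nx+b_n$ affine with $L_n(x_0)=x_{n-1}$, $L_n(x_N)=x_n$, $I_1=[x_0,x_1]$, $I_n=(x_{n-1},x_n]$ for $n\ge2$. For scale functions $\alpha=(\alpha_n)\in(\mathcal{L}^\infty(I))^N$ with $\operatorname{ess\,sup}_{n,x}|\alpha_n(x)|<1$ and $f,b\in\mathcal{L}^2(I)$, the fractal convolution $f*_Tb$ is the unique fixed point in $\mathcal{L}^2(I)$ of the contraction $Tg(x):=f(x)+\alpha_n(L_n^{-1}(x))(g-b)(L_n^{-1}(x))$, $x\in I_n$. A sequence $(g_m)$ in a separable Hilbert space $H$ is a frame with frame bounds $A,B>0$ if $A\|f\|^2\le\sum_m|\langle f,g_m\rangle|^2\le B\|f\|^2$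 for all $f\in H$. *)

theory Defs
  imports "HOL-Analysis.Analysis" "HOL-Probability.Essential_Supremum"
begin

text \<open>Functions are real-valued representatives; L2(I) and Linf(I) are taken w.r.t.
  Lebesgue measure on I = [x 0, x N].\<close>

definition sq_int :: "real set \<Rightarrow> (real \<Rightarrow> real) \<Rightarrow> bool" where
  "sq_int I f \<longleftrightarrow> f \<in> borel_measurable (lebesgue_on I) \<and>
      integrable (lebesgue_on I) (\<lambda>t. (f t)\<^sup>2)"

definition L2_inner :: "real set \<Rightarrow> (real \<Rightarrow> real) \<Rightarrow> (real \<Rightarrow> real) \<Rightarrow> real" where
  "L2_inner I f g = integral\<^sup>L (lebesgue_on I) (\<lambda>t. f t * g t)"

definition L2_norm :: "real set \<Rightarrow> (real \<Rightarrow> real) \<Rightarrow> real" where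
  "L2_norm I f = sqrt (integral\<^sup>L (lebesgue_on I) (\<lambda>t. (f t)\<^sup>2))"

definition Linf_norm :: "real set \<Rightarrow> (real \<Rightarrow> real) \<Rightarrow> ereal" where
  "Linf_norm I h = esssup (lebesgue_on I) (\<lambda>t. ereal \<bar>h t\<bar>)"

definition is_frame :: "real set \<Rightarrow> (nat \<Rightarrow> real \<Rightarrow> real) \<Rightarrow> real \<Rightarrow> real \<Rightarrow> bool" where
  "is_frame I g A B \<longleftrightarrow> A > 0 \<and> B > 0 \<and> (\<forall>m. sq_int I (g m)) \<and>
     (\<forall>h. sq_int I h \<longrightarrow>
        summable (\<lambda>m. (L2_inner I h (g m))\<^sup>2) \<and>
        A * (L2_norm I h)\<^sup>2 \<le> (\<Sum>m. (L2_inner I h (g m))\<^sup>2) \<and>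
        (\<Sum>m. (L2_inner I h (g m))\<^sup>2) \<le> B * (L2_norm I h)\<^sup>2)"

definition is_partition :: "(nat \<Rightarrow> real) \<Rightarrow> nat \<Rightarrow> bool" where
  "is_partition x N \<longleftrightarrow> N \<ge> 2 \<and> (\<forall>k<N. x k < x (Suc k))"

definition Ival :: "(nat \<Rightarrow> real) \<Rightarrow> nat \<Rightarrow> real set" where
  "Ival x N = {x 0 .. x N}"

definition Lmap :: "(nat \<Rightarrow> real) \<Rightarrow> nat \<Rightarrow> nat \<Rightarrow> real \<Rightarrow> real" where
  "Lmap x N n t = x (n - 1) + (t - x 0) * (x n - x (n - 1)) / (x N - x 0)"

definition Linv :: "(nat \<Rightarrow> real) \<Rightarrow> nat \<Rightarrow> nat \<Rightarrow> real \<Rightarrow> real" where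
  "Linv x N n t = x 0 + (t - x (n - 1)) * (x N - x 0) / (x n - x (n - 1))"

definition Isub :: "(nat \<Rightarrow> real) \<Rightarrow> nat \<Rightarrow> real set" where
  "Isub x n = (if n = 1 then {x 0 .. x 1} else {x (n - 1) <.. x n})"

definition Top :: "(nat \<Rightarrow> real) \<Rightarrow> nat \<Rightarrow> (nat \<Rightarrow> real \<Rightarrow> real) \<Rightarrow>
    (real \<Rightarrow> real) \<Rightarrow> (real \<Rightarrow> real) \<Rightarrow> (real \<Rightarrow> real) \<Rightarrow> real \<Rightarrow> real" where
  "Top x N \<alpha> f b g t =
     f t + (\<Sum>n\<in>{1..N}. (if t \<in> Isub x n then
        \<alpha> n (Linv x N n t) * (g (Linv x N n t) - b (Linv x N n t)) else 0))"

text \<open>g is (a representative of) the fractal convolution f *_T b: the fixed point of T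
  in L2(I), equality being a.e. on I.\<close>
definition is_fractal_conv :: "(nat \<Rightarrow> real) \<Rightarrow> nat \<Rightarrow> (nat \<Rightarrow> real \<Rightarrow> real) \<Rightarrow>
    (real \<Rightarrow> real) \<Rightarrow> (real \<Rightarrow> real) \<Rightarrow> (real \<Rightarrow> real) \<Rightarrow> bool" where
  "is_fractal_conv x N \<alpha> f b g \<longleftrightarrow> sq_int (Ival x N) g \<and>
     (AE t in lebesgue_on (Ival x N). g t = Top x N \<alpha> f b g t)"

end

theory Submission imports Defs begin

lemma sq_prod_int:
  fixes f g :: "'a \<Rightarrow> real"
  assumes "f \<in> borel_measurable M" "g \<in> borel_measurable M"
    "integrable M (\<lambda>t. (f t)\<^sup>2)" "integrable M (\<lambda>t. (g t)\<^sup>2)"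
  shows "integrable M (\<lambda>t. f t * g t)"
proof (rule Bochner_Integration.integrable_bound[where f="\<lambda>t. (f t)\<^sup>2 + (g t)\<^sup>2"])
  show "integrable M (\<lambda>t. (f t)\<^sup>2 + (g t)\<^sup>2)" using assms by auto
  show "(\<lambda>t. f t * g t) \<in> borel_measurable M" using assms by auto
  have "\<And>a b::real. \<bar>a*b\<bar> \<le> \<bar>a\<^sup>2 + b\<^sup>2\<bar>"
  proof -
    fix a b :: real
    have "0 \<le> (\<bar>a\<bar>-\<bar>b\<bar>)\<^sup>2" by simp
    then have "2*(\<bar>a\<bar>*\<bar>b\<bar>) \<le> a\<^sup>2 + b\<^sup>2" by (simp add: power2_diff)
    moreover have "0 \<le> \<bar>a\<bar>*\<bar>b\<bar>" by simp
    ultimately show "\<bar>a*b\<bar> \<le> \<bar>a\<^sup>2 + b\<^sup>2\<bar>"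
      using abs_mult[of a b] abs_of_nonneg[of "a\<^sup>2 + b\<^sup>2"] by simp
  qed
  then show "AE x in M. norm (f x * g x) \<le> norm ((f x)\<^sup>2 + (g x)\<^sup>2)" by simp
qed

lemma sq_diff_int:
  fixes f g :: "'a \<Rightarrow> real"
  assumes "f \<in> borel_measurable M" "g \<in> borel_measurable M"
    "integrable M (\<lambda>t. (f t)\<^sup>2)" "integrable M (\<lambda>t. (g t)\<^sup>2)"
  shows "integrable M (\<lambda>t. (f t - g t)\<^sup>2)"
proof -
  have "(\<lambda>t. (f t - g t)\<^sup>2) = (\<lambda>t. (f t)\<^sup>2 - 2 * (f t * g t) + (g t)\<^sup>2)"
    by (auto simp: power2_diff)
  then show ?thesis using sq_prod_int[OF assms] assms by simp
qed

lemma quad_disc: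
  fixes a b c :: real
  assumes "\<And>t. 0 \<le> a - 2*t*b + t\<^sup>2 * c" and c0: "0 \<le> c"
  shows "b\<^sup>2 \<le> a * c"
proof (cases "c = 0")
  case True
  have "b = 0"
  proof (rule ccontr)
    assume "b \<noteq> 0"
    have "0 \<le> a - 2*((a+1)/(2*b))*b" using assms(1)[of "(a+1)/(2*b)"] True by simp
    also have "\<dots> = -1" using \<open>b \<noteq> 0\<close> by (simp add: field_simps)
    finally show False by simp
  qed
  then show ?thesis using assms(1)[of 0] True by simp
next
  case False
  have "0 \<le> a" using assms(1)[of 0] by simp
  from c0 have "c > 0" using False by simp
  have "0 \<le> a - 2*(b/c)*b + (b/c)\<^sup>2 * c" by (rule assms)
  also have "\<dots> = (a*c - b\<^sup>2)/c" using False by (simp add: field_simps power2_eq_square)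
  finally show ?thesis using \<open>c > 0\<close> by (simp add: divide_nonneg_pos zero_le_divide_iff)
qed

lemma CS_int:
  fixes f g :: "'a \<Rightarrow> real"
  assumes fm: "f \<in> borel_measurable M" and gm: "g \<in> borel_measurable M"
    and fi: "integrable M (\<lambda>t. (f t)\<^sup>2)" and gi: "integrable M (\<lambda>t. (g t)\<^sup>2)"
  shows "(\<integral>t. f t * g t \<partial>M)\<^sup>2 \<le> (\<integral>t. (f t)\<^sup>2 \<partial>M) * (\<integral>t. (g t)\<^sup>2 \<partial>M)"
proof (rule quad_disc)
  have fg: "integrable M (\<lambda>t. f t * g t)" using sq_prod_int[OF assms] .
  fix s :: real
  have "(\<lambda>t. (f t - s * g t)\<^sup>2) = (\<lambda>t. (f t)\<^sup>2 - 2 * s * (f t * g t) + s\<^sup>2 * (g t)\<^sup>2)"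
    by (auto simp: power2_diff algebra_simps power2_eq_square)
  then have "(\<integral>t. (f t - s * g t)\<^sup>2 \<partial>M) = (\<integral>t. (f t)\<^sup>2 \<partial>M) - 2 * s * (\<integral>t. f t * g t \<partial>M) + s\<^sup>2 * (\<integral>t. (g t)\<^sup>2 \<partial>M)"
    using fg fi gi by simp
  moreover have "0 \<le> (\<integral>t. (f t - s * g t)\<^sup>2 \<partial>M)" by simp
  ultimately show "0 \<le> (\<integral>t. (f t)\<^sup>2 \<partial>M) - 2 * s * (\<integral>t. f t * g t \<partial>M) + s\<^sup>2 * (\<integral>t. (g t)\<^sup>2 \<partial>M)" by simp
  show "0 \<le> (\<integral>t. (g t)\<^sup>2 \<partial>M)" by simp
qed

lemma mink_int:
  fixes f g :: "'a \<Rightarrow> real"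
  assumes fm: "f \<in> borel_measurable M" and gm: "g \<in> borel_measurable M"
    and fi: "integrable M (\<lambda>t. (f t)\<^sup>2)" and gi: "integrable M (\<lambda>t. (g t)\<^sup>2)"
  shows "sqrt (\<integral>t. (g t)\<^sup>2 \<partial>M) \<le> sqrt (\<integral>t. (f t)\<^sup>2 \<partial>M) + sqrt (\<integral>t. (g t - f t)\<^sup>2 \<partial>M)"
proof -
  define d where "d = (\<lambda>t. g t - f t)"
  have dm: "d \<in> borel_measurable M" using fm gm by (simp add: d_def)
  have di: "integrable M (\<lambda>t. (d t)\<^sup>2)" unfolding d_def using sq_diff_int[OF gm fm gi fi] .
  have fd: "integrable M (\<lambda>t. f t * d t)" using sq_prod_int[OF fm dm fi di] .
  define a where "a = (\<integral>t. (f t)\<^sup>2 \<partial>M)"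
  define c where "c = (\<integral>t. (d t)\<^sup>2 \<partial>M)"
  define b where "b = (\<integral>t. f t * d t \<partial>M)"
  have a0: "0 \<le> a" and c0: "0 \<le> c" by (simp_all add: a_def c_def)
  have "b\<^sup>2 \<le> a * c" unfolding a_def b_def c_def using CS_int[OF fm dm fi di] .
  then have "\<bar>b\<bar> \<le> sqrt (a * c)" using real_le_rsqrt by (simp add: power2_abs)
  then have b: "b \<le> sqrt a * sqrt c" by (simp add: real_sqrt_mult)
  have "(\<lambda>t. (g t)\<^sup>2) = (\<lambda>t. (f t)\<^sup>2 + 2 * (f t * d t) + (d t)\<^sup>2)"
    by (auto simp: d_def power2_eq_square algebra_simps)
  then have "(\<integral>t. (g t)\<^sup>2 \<partial>M) = a + 2 * b + c"
    using fi fd di by (simp add: a_def b_def c_def)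
  also have "\<dots> \<le> (sqrt a + sqrt c)\<^sup>2"
    using b a0 c0 by (simp add: power2_sum)
  finally have "sqrt (\<integral>t. (g t)\<^sup>2 \<partial>M) \<le> sqrt ((sqrt a + sqrt c)\<^sup>2)"
    using real_sqrt_le_mono by blast
  also have "\<dots> = sqrt a + sqrt c" using a0 c0 by simp
  finally show ?thesis by (simp add: a_def c_def d_def)
qed

lemma aff_meas: "(c::real) \<noteq> 0 \<Longrightarrow> (\<lambda>x::real. t + c * x) \<in> lebesgue \<rightarrow>\<^sub>M lebesgue"
  using lebesgue_affine_measurable[where c="\<lambda>_. c" and t=t] by simp

lemma part_mono:
  assumes "is_partition x N" "i < j" "j \<le> N"
  shows "x i < x j"
  using assms(2,3)
proof (induction j)
  case 0 then show ?case by simp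
next
  case (Suc j)
  have s: "x j < x (Suc j)" using assms(1) Suc.prems unfolding is_partition_def by simp
  show ?case
  proof (cases "i = j")
    case True then show ?thesis using s by simp
  next
    case False then have "x i < x j" using Suc by simp
    then show ?thesis using s by simp
  qed
qed

lemma part_le:
  assumes "is_partition x N" "i \<le> j" "j \<le> N"
  shows "x i \<le> x j"
  using part_mono[OF assms(1) _ assms(3), of i] assms(2) by (cases "i = j") auto

lemma Isub_bounds:
  assumes "n \<ge> 1" "t \<in> Isub x n"
  shows "x (n - 1) \<le> t" "t \<le> x n" "n \<ge> 2 \<Longrightarrow> x (n - 1) < t"
  using assms by (auto simp: Isub_def split: if_splits)

lemma Isub_disj:
  assumes part: "is_partition x N" and n: "n \<in> {1..N}" and k: "k \<in> {1..N}" and "n \<noteq> k"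
    and tn: "t \<in> Isub x n" and tk: "t \<in> Isub x k"
  shows False
proof -
  { fix a b assume a: "a \<in> {1..N}" "b \<in> {1..N}" "a < b" "t \<in> Isub x a" "t \<in> Isub x b"
    have "t \<le> x a" using Isub_bounds a by auto
    also have "x a \<le> x (b - 1)" using part_le[OF part, of a "b - 1"] a by auto
    also have "x (b - 1) < t" using Isub_bounds(3)[of b t x] a by auto
    finally have False by simp }
  then show False using assms by (cases "n < k") (auto, metis linorder_neqE_nat)
qed

lemma Linv_in:
  assumes part: "is_partition x N" and n: "n \<in> {1..N}" and t: "t \<in> Isub x n"
  shows "Linv x N n t \<in> Ival x N"
proof -
  have d: "x (n - 1) < x n" using part_mono[OF part, of "n - 1" n] n by auto
  have D: "x 0 < x N" using part_mono[OF part, of 0 N] part by (auto simp: is_partition_def)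
  have t1: "x (n - 1) \<le> t" "t \<le> x n" using Isub_bounds t n by auto
  define r where "r = (t - x (n - 1)) / (x n - x (n - 1))"
  have r: "0 \<le> r" "r \<le> 1" using t1 d by (auto simp: r_def)
  have "Linv x N n t = x 0 + r * (x N - x 0)" by (simp add: Linv_def r_def)
  moreover have "0 \<le> r * (x N - x 0)" "r * (x N - x 0) \<le> x N - x 0"
    using r D by (auto simp: mult_le_cancel_right1)
  ultimately show ?thesis by (auto simp: Ival_def)
qed

lemma tele: "(\<Sum>n\<in>{1..N::nat}. x n - x (n - 1)) = (x N - x 0 :: real)"
  by (induction N) auto

lemma ind_le: "ennreal (d::real) * indicator S t \<le> ennreal d"
  by (cases "t \<in> S") simp_all

lemma ind_if: "ennreal (if s \<in> S then (r::real) else 0) = ennreal r * indicator S s"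
  by (cases "s \<in> S") simp_all

lemma key:
  fixes x :: "nat \<Rightarrow> real" and \<alpha> :: "nat \<Rightarrow> real \<Rightarrow> real" and F G :: "real \<Rightarrow> real"
  assumes part: "is_partition x N"
    and am: "\<And>n. n \<in> {1..N} \<Longrightarrow> \<alpha> n \<in> borel_measurable (lebesgue_on (Ival x N))"
    and ab: "\<And>n. n \<in> {1..N} \<Longrightarrow> AE t in lebesgue_on (Ival x N). \<bar>\<alpha> n t\<bar> \<le> \<Lambda>"
    and sqF: "sq_int (Ival x N) F" and conv: "is_fractal_conv x N \<alpha> F (\<lambda>_. 0) G"
  shows "(\<integral>t. (G t - F t)\<^sup>2 \<partial>lebesgue_on (Ival x N)) \<le> \<Lambda>\<^sup>2 * (\<integral>t. (G t)\<^sup>2 \<partial>lebesgue_on (Ival x N))"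
proof -
  define I where "I = Ival x N"
  define M where "M = lebesgue_on I"
  have Iset: "I \<in> sets lebesgue" by (simp add: I_def Ival_def)
  have Iset': "I \<inter> space lebesgue \<in> sets lebesgue" using Iset by simp
  have Fm: "F \<in> borel_measurable M" and Fi: "integrable M (\<lambda>t. (F t)\<^sup>2)"
    using sqF by (auto simp: sq_int_def M_def I_def)
  have Gm: "G \<in> borel_measurable M" and Gi: "integrable M (\<lambda>t. (G t)\<^sup>2)"
    and GAE: "AE t in M. G t = Top x N \<alpha> F (\<lambda>_. 0) G t"
    using conv unfolding M_def I_def by (auto simp: is_fractal_conv_def sq_int_def)
  have D: "x 0 < x N" using part_mono[OF part, of 0 N] part by (auto simp: is_partition_def)
  have dn: "\<And>n. n \<in> {1..N} \<Longrightarrow> x (n - 1) < x n" using part_mono[OF part] by force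
  define c where "c n = (x N - x 0) / (x n - x (n - 1))" for n
  define t0 where "t0 n = x 0 - x (n - 1) * c n" for n
  have cpos: "\<And>n. n \<in> {1..N} \<Longrightarrow> c n > 0" using dn D by (simp add: c_def)
  have Linv_eq: "\<And>n t. n \<in> {1..N} \<Longrightarrow> Linv x N n t = t0 n + c n * t"
  proof -
    fix n t assume n: "n \<in> {1..N}"
    have ne: "x n - x (n - 1) \<noteq> 0" using dn[OF n] by simp
    show "Linv x N n t = t0 n + c n * t"
      unfolding Linv_def t0_def c_def using ne
      by (simp add: divide_simps) (simp add: algebra_simps)
  qed
  define Dt where "Dt t = (\<Sum>n\<in>{1..N}. (if t \<in> Isub x n then
        \<alpha> n (Linv x N n t) * (G (Linv x N n t) - 0) else 0))" for t
  have TopD: "\<And>t. Top x N \<alpha> F (\<lambda>_. 0) G t = F t + Dt t" by (simp add: Top_def Dt_def)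
  have AED: "AE t in M. (G t - F t)\<^sup>2 = (Dt t)\<^sup>2" using GAE by (auto simp: TopD)
  define \<psi> where "\<psi> n s = ennreal (if s \<in> I then (\<alpha> n s * G s)\<^sup>2 else 0)" for n s
  have \<psi>m: "\<And>n. n \<in> {1..N} \<Longrightarrow> \<psi> n \<in> borel_measurable lebesgue"
  proof -
    fix n assume n: "n \<in> {1..N}"
    have "(\<lambda>s. (\<alpha> n s * G s)\<^sup>2) \<in> borel_measurable (lebesgue_on I)"
      using am[OF n] Gm by (auto simp: M_def I_def)
    then have "(\<lambda>s. if s \<in> I then (\<alpha> n s * G s)\<^sup>2 else 0) \<in> borel_measurable lebesgue"
      using borel_measurable_if[OF Iset, where f="\<lambda>s. (\<alpha> n s * G s)\<^sup>2"] by simp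
    then show "\<psi> n \<in> borel_measurable lebesgue" unfolding \<psi>_def
      by (rule measurable_compose[OF _ measurable_ennreal])
  qed
  have \<psi>am: "\<And>n. n \<in> {1..N} \<Longrightarrow> (\<lambda>t. \<psi> n (t0 n + c n * t)) \<in> borel_measurable lebesgue"
  proof -
    fix n assume n: "n \<in> {1..N}"
    show "(\<lambda>t. \<psi> n (t0 n + c n * t)) \<in> borel_measurable lebesgue"
      using measurable_comp[OF aff_meas[of "c n" "t0 n"] \<psi>m[OF n]] cpos[OF n] by (simp add: o_def)
  qed
  have pw: "ennreal ((Dt t)\<^sup>2) * indicator I t \<le> (\<Sum>n\<in>{1..N}. \<psi> n (t0 n + c n * t))" for t
  proof (cases "\<exists>k\<in>{1..N}. t \<in> Isub x k")
    case True
    then obtain k where k: "k \<in> {1..N}" "t \<in> Isub x k" by blast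
    have z: "\<forall>n\<in>{1..N}-{k}. t \<notin> Isub x n"
      using Isub_disj[OF part _ k(1) _ _ k(2)] by blast
    define tm where "tm n = (if t \<in> Isub x n then
        \<alpha> n (Linv x N n t) * (G (Linv x N n t) - 0) else 0)" for n
    have "Dt t = sum tm {1..N}" unfolding Dt_def tm_def by (rule refl)
    also have "\<dots> = tm k + sum tm ({1..N} - {k})"
      by (rule sum.remove) (use k in simp_all)
    also have "sum tm ({1..N} - {k}) = 0"
      by (rule sum.neutral) (use z in \<open>simp add: tm_def\<close>)
    finally have Dk: "Dt t = \<alpha> k (Linv x N k t) * G (Linv x N k t)" using k by (simp add: tm_def)
    have Lk: "Linv x N k t \<in> I" using Linv_in[OF part k] unfolding I_def .
    have "ennreal ((Dt t)\<^sup>2) * indicator I t \<le> ennreal ((Dt t)\<^sup>2)"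
      by (rule ind_le)
    also have "\<dots> = \<psi> k (t0 k + c k * t)"
      using Lk Dk Linv_eq[OF k(1)] by (simp add: \<psi>_def)
    also have "\<dots> \<le> (\<Sum>n\<in>{1..N}. \<psi> n (t0 n + c n * t))"
      by (rule member_le_sum) (use k in auto)
    finally show ?thesis .
  next
    case False
    then have "Dt t = 0" unfolding Dt_def by (intro sum.neutral) auto
    then show ?thesis by simp
  qed
  have int\<psi>: "\<And>n. n \<in> {1..N} \<Longrightarrow> (\<integral>\<^sup>+ s. \<psi> n s \<partial>lebesgue) \<le> ennreal (\<Lambda>\<^sup>2) * (\<integral>\<^sup>+ s. ennreal ((G s)\<^sup>2) \<partial>M)"
  proof -
    fix n assume n: "n \<in> {1..N}"
    have "(\<integral>\<^sup>+ s. \<psi> n s \<partial>lebesgue) = (\<integral>\<^sup>+ s. ennreal ((\<alpha> n s * G s)\<^sup>2) * indicator I s \<partial>lebesgue)"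
      by (intro nn_integral_cong) (simp only: \<psi>_def ind_if)
    also have "\<dots> = (\<integral>\<^sup>+ s. ennreal ((\<alpha> n s * G s)\<^sup>2) \<partial>M)"
      unfolding M_def
      using nn_integral_restrict_space[where f="\<lambda>s. ennreal ((\<alpha> n s * G s)\<^sup>2)" and M=lebesgue, OF Iset']
      by (rule sym)
    also have "\<dots> \<le> (\<integral>\<^sup>+ s. ennreal (\<Lambda>\<^sup>2) * ennreal ((G s)\<^sup>2) \<partial>M)"
    proof (rule nn_integral_mono_AE)
      show "AE s in M. ennreal ((\<alpha> n s * G s)\<^sup>2) \<le> ennreal (\<Lambda>\<^sup>2) * ennreal ((G s)\<^sup>2)"
        using ab[OF n] unfolding M_def I_def
      proof eventually_elim
        case (elim s)
        have "\<bar>\<alpha> n s\<bar>\<^sup>2 \<le> \<Lambda>\<^sup>2" by (rule power_mono[OF elim abs_ge_zero])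
        then have "(\<alpha> n s)\<^sup>2 \<le> \<Lambda>\<^sup>2" by simp
        then have "(\<alpha> n s * G s)\<^sup>2 \<le> \<Lambda>\<^sup>2 * (G s)\<^sup>2"
          by (simp add: power_mult_distrib mult_right_mono)
        then show ?case by (simp add: ennreal_mult[symmetric] ennreal_leI)
      qed
    qed
    also have "\<dots> = ennreal (\<Lambda>\<^sup>2) * (\<integral>\<^sup>+ s. ennreal ((G s)\<^sup>2) \<partial>M)"
      by (rule nn_integral_cmult, rule measurable_compose[OF _ measurable_ennreal],
          rule borel_measurable_power[OF Gm])
    finally show "(\<integral>\<^sup>+ s. \<psi> n s \<partial>lebesgue) \<le> ennreal (\<Lambda>\<^sup>2) * (\<integral>\<^sup>+ s. ennreal ((G s)\<^sup>2) \<partial>M)" .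
  qed
  have aff: "\<And>n. n \<in> {1..N} \<Longrightarrow> (\<integral>\<^sup>+ t. \<psi> n (t0 n + c n * t) \<partial>lebesgue) = ennreal (1 / c n) * (\<integral>\<^sup>+ s. \<psi> n s \<partial>lebesgue)"
  proof -
    fix n assume n: "n \<in> {1..N}"
    have "(\<integral>\<^sup>+ s. \<psi> n s \<partial>lebesgue) = ennreal \<bar>c n\<bar> * (\<integral>\<^sup>+ t. \<psi> n (t0 n + c n * t) \<partial>lebesgue)"
      by (rule nn_integral_real_affine_lebesgue[OF \<psi>m[OF n]]) (use cpos[OF n] in simp)
    then have "ennreal (1 / c n) * (\<integral>\<^sup>+ s. \<psi> n s \<partial>lebesgue) = ennreal (1 / c n) * ennreal (c n) * (\<integral>\<^sup>+ t. \<psi> n (t0 n + c n * t) \<partial>lebesgue)"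
      using cpos[OF n] by (simp add: mult.assoc)
    also have "ennreal (1 / c n) * ennreal (c n) = 1"
      using cpos[OF n] by (simp add: ennreal_mult[symmetric])
    finally show "(\<integral>\<^sup>+ t. \<psi> n (t0 n + c n * t) \<partial>lebesgue) = ennreal (1 / c n) * (\<integral>\<^sup>+ s. \<psi> n s \<partial>lebesgue)" by simp
  qed
  define KG where "KG = (\<integral>t. (G t)\<^sup>2 \<partial>M)"
  have KG0: "0 \<le> KG" by (simp add: KG_def)
  have KGe: "(\<integral>\<^sup>+ s. ennreal ((G s)\<^sup>2) \<partial>M) = ennreal KG"
    unfolding KG_def by (rule nn_integral_eq_integral[OF Gi]) simp
  have GFi: "integrable M (\<lambda>t. (G t - F t)\<^sup>2)" using sq_diff_int[OF Gm Fm Gi Fi] .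
  have "ennreal (\<integral>t. (G t - F t)\<^sup>2 \<partial>M) = (\<integral>\<^sup>+ t. ennreal ((G t - F t)\<^sup>2) \<partial>M)"
    by (rule nn_integral_eq_integral[OF GFi, symmetric]) simp
  also have "\<dots> = (\<integral>\<^sup>+ t. ennreal ((Dt t)\<^sup>2) \<partial>M)"
    by (rule nn_integral_cong_AE) (use AED in auto)
  also have "\<dots> = (\<integral>\<^sup>+ t. ennreal ((Dt t)\<^sup>2) * indicator I t \<partial>lebesgue)"
    unfolding M_def
    by (rule nn_integral_restrict_space[where f="\<lambda>t. ennreal ((Dt t)\<^sup>2)" and M=lebesgue, OF Iset'])
  also have "\<dots> \<le> (\<integral>\<^sup>+ t. (\<Sum>n\<in>{1..N}. \<psi> n (t0 n + c n * t)) \<partial>lebesgue)"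
    by (rule nn_integral_mono) (rule pw)
  also have "\<dots> = (\<Sum>n\<in>{1..N}. (\<integral>\<^sup>+ t. \<psi> n (t0 n + c n * t) \<partial>lebesgue))"
    by (rule nn_integral_sum) (rule \<psi>am)
  also have "\<dots> \<le> (\<Sum>n\<in>{1..N}. ennreal (1 / c n) * (ennreal (\<Lambda>\<^sup>2) * ennreal KG))"
    apply (rule sum_mono)
    using aff int\<psi> KGe by (simp add: mult_left_mono)
  also have "\<dots> = (\<Sum>n\<in>{1..N}. ennreal (1 / c n * \<Lambda>\<^sup>2 * KG))"
  proof (intro sum.cong refl)
    fix n assume n: "n \<in> {1..N}"
    have h2: "0 \<le> 1 / c n" using cpos[OF n] by simp
    have h3: "0 \<le> \<Lambda>\<^sup>2" by simp
    have h1: "0 \<le> 1 / c n * \<Lambda>\<^sup>2" using h2 h3 by (rule mult_nonneg_nonneg)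
    have "ennreal (1 / c n * \<Lambda>\<^sup>2 * KG) = ennreal (1 / c n) * ennreal (\<Lambda>\<^sup>2) * ennreal KG"
      by (simp only: ennreal_mult h1 h2 h3 KG0)
    then show "ennreal (1 / c n) * (ennreal (\<Lambda>\<^sup>2) * ennreal KG) = ennreal (1 / c n * \<Lambda>\<^sup>2 * KG)"
      by (simp only: mult.assoc)
  qed
  also have "\<dots> = ennreal (\<Sum>n\<in>{1..N}. 1 / c n * \<Lambda>\<^sup>2 * KG)"
    using cpos KG0 by (intro sum_ennreal) (simp add: less_imp_le)
  also have "(\<Sum>n\<in>{1..N}. 1 / c n * \<Lambda>\<^sup>2 * KG) = (\<Sum>n\<in>{1..N}. (x n - x (n - 1))) / (x N - x 0) * \<Lambda>\<^sup>2 * KG"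
    by (simp add: c_def sum_distrib_right sum_divide_distrib)
  also have "\<dots> = \<Lambda>\<^sup>2 * KG" using D by (simp only: tele) simp
  finally have "ennreal (\<integral>t. (G t - F t)\<^sup>2 \<partial>M) \<le> ennreal (\<Lambda>\<^sup>2 * KG)" .
  then have "(\<integral>t. (G t - F t)\<^sup>2 \<partial>M) \<le> \<Lambda>\<^sup>2 * KG"
    using KG0 by (simp add: ennreal_le_iff)
  then show ?thesis by (simp add: M_def I_def KG_def)
qed

lemma young_sq:
  fixes a b t :: real assumes t: "t > 0"
  shows "(a + b)\<^sup>2 \<le> (1 + t) * a\<^sup>2 + (1 + 1/t) * b\<^sup>2"
proof -
  have "0 \<le> (t * a - b)\<^sup>2 / t" using t by simp
  also have "(t * a - b)\<^sup>2 / t = t * a\<^sup>2 - 2 * a * b + b\<^sup>2 / t"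
    using t by (simp add: power2_diff field_simps power2_eq_square)
  finally have "2 * a * b \<le> t * a\<^sup>2 + b\<^sup>2 / t" by simp
  then show ?thesis by (simp add: power2_sum algebra_simps)
qed

lemma seq_frame:
  fixes a b c :: "nat \<Rightarrow> real" and A B H R :: real
  assumes sa: "summable (\<lambda>m. (a m)\<^sup>2)" and lo: "A * H \<le> (\<Sum>m. (a m)\<^sup>2)" and up: "(\<Sum>m. (a m)\<^sup>2) \<le> B * H"
    and sc: "summable c" and R: "R = (\<Sum>m. c m)" and bc: "\<And>m. (b m)\<^sup>2 \<le> H * c m"
    and c0: "\<And>m. 0 \<le> c m" and RA: "R < A" and A: "A > 0" and B: "B > 0" and H: "H \<ge> 0"
  shows "summable (\<lambda>m. (a m + b m)\<^sup>2) \<and>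
     A * (1 - sqrt (R / A))\<^sup>2 * H \<le> (\<Sum>m. (a m + b m)\<^sup>2) \<and>
     (\<Sum>m. (a m + b m)\<^sup>2) \<le> B * (1 + sqrt (R / B))\<^sup>2 * H"
proof -
  have sb: "summable (\<lambda>m. (b m)\<^sup>2)"
    by (rule summable_comparison_test[where g="\<lambda>m. H * c m"]) (use bc sc in auto)
  have Sb: "(\<Sum>m. (b m)\<^sup>2) \<le> H * R"
    unfolding R using suminf_le[OF bc sb summable_mult[OF sc]] suminf_mult[OF sc] by simp
  have sab: "summable (\<lambda>m. (a m + b m)\<^sup>2)"
  proof (rule summable_comparison_test[where g="\<lambda>m. 2 * (a m)\<^sup>2 + 2 * (b m)\<^sup>2"])
    show "summable (\<lambda>m. 2 * (a m)\<^sup>2 + 2 * (b m)\<^sup>2)" using sa sb by (intro summable_add summable_mult)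
    have "\<And>m. (a m + b m)\<^sup>2 \<le> 2 * (a m)\<^sup>2 + 2 * (b m)\<^sup>2"
      using young_sq[of 1] by simp
    then show "\<exists>N. \<forall>n\<ge>N. norm ((a n + b n)\<^sup>2) \<le> 2 * (a n)\<^sup>2 + 2 * (b n)\<^sup>2" by simp
  qed
  have R0: "0 \<le> R" unfolding R using c0 sc by (simp add: suminf_nonneg)
  define S where "S = (\<Sum>m. (a m + b m)\<^sup>2)"
  show ?thesis
  proof (cases "R = 0")
    case True
    have "\<And>m. c m = 0" using suminf_eq_zero_iff[OF sc] c0 True R by auto
    then have "\<And>m. b m = 0" using bc by (metis mult_zero_right power_eq_0_iff zero_le_power2 order_antisym)
    then show ?thesis using sa lo up True by simp
  next
    case False
    then have Rp: "R > 0" using R0 by simp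
    have gen: "\<And>t. t > 0 \<Longrightarrow> S \<le> (1 + t) * (B * H) + (1 + 1/t) * (H * R)
                 \<and> A * H \<le> (1 + t) * S + (1 + 1/t) * (H * R)"
    proof -
      fix t :: real assume t: "t > 0"
      have s1: "summable (\<lambda>m. (1 + t) * (a m)\<^sup>2 + (1 + 1/t) * (b m)\<^sup>2)"
        using sa sb by (intro summable_add summable_mult)
      have s2: "summable (\<lambda>m. (1 + t) * (a m + b m)\<^sup>2 + (1 + 1/t) * (b m)\<^sup>2)"
        using sab sb by (intro summable_add summable_mult)
      have "S \<le> (\<Sum>m. (1 + t) * (a m)\<^sup>2 + (1 + 1/t) * (b m)\<^sup>2)"
        unfolding S_def by (rule suminf_le[OF _ sab s1]) (rule young_sq[OF t])
      also have "\<dots> = (1 + t) * (\<Sum>m. (a m)\<^sup>2) + (1 + 1/t) * (\<Sum>m. (b m)\<^sup>2)"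
        using sa sb by (simp add: suminf_add[symmetric] suminf_mult)
      also have "\<dots> \<le> (1 + t) * (B * H) + (1 + 1/t) * (H * R)"
        using up Sb t by (intro add_mono mult_left_mono) auto
      finally have u: "S \<le> (1 + t) * (B * H) + (1 + 1/t) * (H * R)" .
      have "A * H \<le> (\<Sum>m. (a m)\<^sup>2)" by (rule lo)
      also have "\<dots> \<le> (\<Sum>m. (1 + t) * (a m + b m)\<^sup>2 + (1 + 1/t) * (b m)\<^sup>2)"
        using young_sq[OF t, of "a m + b m" "- b m" for m]
        by (intro suminf_le[OF _ sa s2]) simp
      also have "\<dots> = (1 + t) * S + (1 + 1/t) * (\<Sum>m. (b m)\<^sup>2)"
        using sab sb by (simp add: suminf_add[symmetric] suminf_mult S_def)
      also have "\<dots> \<le> (1 + t) * S + (1 + 1/t) * (H * R)"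
        using Sb t by (intro add_mono mult_left_mono) auto
      finally show "S \<le> (1 + t) * (B * H) + (1 + 1/t) * (H * R) \<and> A * H \<le> (1 + t) * S + (1 + 1/t) * (H * R)"
        using u by simp
    qed
    define sA where "sA = sqrt A"
    define sB where "sB = sqrt B"
    define sR where "sR = sqrt R"
    have sAp: "sA > 0" and sBp: "sB > 0" and sRp: "sR > 0" using A B Rp by (auto simp: sA_def sB_def sR_def)
    have Aeq: "A = sA\<^sup>2" and Beq: "B = sB\<^sup>2" and Req: "R = sR\<^sup>2" using A B Rp by (auto simp: sA_def sB_def sR_def)
    have sRA: "sR < sA" using RA R0 by (simp add: sA_def sR_def)
    have tA: "A * (1 - sqrt (R / A))\<^sup>2 = (sA - sR)\<^sup>2"
      using sAp by (simp add: real_sqrt_divide sA_def[symmetric] sR_def[symmetric] Aeq field_simps power2_eq_square)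
    have tB: "B * (1 + sqrt (R / B))\<^sup>2 = (sB + sR)\<^sup>2"
      using sBp by (simp add: real_sqrt_divide sB_def[symmetric] sR_def[symmetric] Beq field_simps power2_eq_square)
    have upper: "S \<le> (sB + sR)\<^sup>2 * H"
    proof -
      have "S \<le> (1 + sR / sB) * (B * H) + (1 + 1 / (sR / sB)) * (H * R)"
        using gen[of "sR / sB"] sRp sBp by simp
      also have "\<dots> = (sB + sR)\<^sup>2 * H"
        using sRp sBp by (simp add: Beq Req field_simps power2_eq_square)
      finally show ?thesis .
    qed
    have lower: "(sA - sR)\<^sup>2 * H \<le> S"
    proof -
      define t where "t = sR / (sA - sR)"
      have tp: "t > 0" using sRp sRA by (simp add: t_def)
      have "A * H \<le> (1 + t) * S + (1 + 1 / t) * (H * R)" using gen[OF tp] by simp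
      also have "(1 + t) = sA / (sA - sR)" using sRA by (simp add: t_def field_simps)
      also have "(1 + 1 / t) * (H * R) = sA * sR * H" using sRA sRp
        by (simp add: t_def Req field_simps power2_eq_square)
      finally have "A * H - sA * sR * H \<le> sA / (sA - sR) * S" by simp
      then have "(A * H - sA * sR * H) * ((sA - sR) / sA) \<le> sA / (sA - sR) * S * ((sA - sR) / sA)"
        using sRA sAp by (intro mult_right_mono) auto
      also have "sA / (sA - sR) * S * ((sA - sR) / sA) = S" using sRA sAp by (simp add: field_simps)
      also have "(A * H - sA * sR * H) * ((sA - sR) / sA) = (sA - sR)\<^sup>2 * H"
        using sAp by (simp add: Aeq field_simps power2_eq_square)
      finally show ?thesis .
    qed
    show ?thesis using sab upper lower tA tB by (simp add: S_def)
  qed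
qed

theorem theorem7p2:
  fixes x :: "nat \<Rightarrow> real" and N :: nat
    and f :: "nat \<Rightarrow> real \<Rightarrow> real"
    and \<alpha> :: "nat \<Rightarrow> nat \<Rightarrow> real \<Rightarrow> real"
    and \<Lambda> :: "nat \<Rightarrow> real"
    and g :: "nat \<Rightarrow> real \<Rightarrow> real"
    and A B :: real
  assumes part: "is_partition x N"
    and frame: "is_frame (Ival x N) f A B"
    and alpha_meas: "\<And>m n. n \<in> {1..N} \<Longrightarrow> \<alpha> m n \<in> borel_measurable (lebesgue_on (Ival x N))"
    and Lambda_def: "\<And>m. ereal (\<Lambda> m) = Max ((\<lambda>n. Linf_norm (Ival x N) (\<alpha> m n)) ` {1..N})"
    and Lambda_lt1: "\<And>m. \<Lambda> m < 1"
    and conv: "\<And>m. is_fractal_conv x N (\<alpha> m) (f m) (\<lambda>_. 0) (g m)"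
    and R_summable: "summable (\<lambda>m. (\<Lambda> m / (1 - \<Lambda> m))\<^sup>2 * (L2_norm (Ival x N) (f m))\<^sup>2)"
    and R_lt: "(\<Sum>m. (\<Lambda> m / (1 - \<Lambda> m))\<^sup>2 * (L2_norm (Ival x N) (f m))\<^sup>2) < A"
  shows "is_frame (Ival x N) g
     (A * (1 - sqrt ((\<Sum>m. (\<Lambda> m / (1 - \<Lambda> m))\<^sup>2 * (L2_norm (Ival x N) (f m))\<^sup>2) / A))\<^sup>2)
     (B * (1 + sqrt ((\<Sum>m. (\<Lambda> m / (1 - \<Lambda> m))\<^sup>2 * (L2_norm (Ival x N) (f m))\<^sup>2) / B))\<^sup>2)"
proof -
  define I where "I = Ival x N"
  define M where "M = lebesgue_on I"
  define c where "c m = (\<Lambda> m / (1 - \<Lambda> m))\<^sup>2 * (L2_norm I (f m))\<^sup>2" for m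
  define R where "R = (\<Sum>m. c m)"
  have sc: "summable c" using R_summable unfolding c_def[abs_def] I_def .
  have RA: "R < A" using R_lt unfolding R_def c_def I_def .
  have Ap: "A > 0" and Bp: "B > 0" and fsq: "\<And>m. sq_int I (f m)"
    and fr: "\<And>h. sq_int I h \<Longrightarrow> summable (\<lambda>m. (L2_inner I h (f m))\<^sup>2) \<and>
        A * (L2_norm I h)\<^sup>2 \<le> (\<Sum>m. (L2_inner I h (f m))\<^sup>2) \<and>
        (\<Sum>m. (L2_inner I h (f m))\<^sup>2) \<le> B * (L2_norm I h)\<^sup>2"
    using frame by (auto simp: is_frame_def I_def)
  have gsq: "\<And>m. sq_int I (g m)" using conv by (simp add: is_fractal_conv_def I_def)
  have Fm: "\<And>m. f m \<in> borel_measurable M" and Fi: "\<And>m. integrable M (\<lambda>t. (f m t)\<^sup>2)"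
    using fsq by (auto simp: sq_int_def M_def)
  have Gm: "\<And>m. g m \<in> borel_measurable M" and Gi: "\<And>m. integrable M (\<lambda>t. (g m t)\<^sup>2)"
    using gsq by (auto simp: sq_int_def M_def)
  have AEb: "\<And>m n. n \<in> {1..N} \<Longrightarrow> AE t in M. \<bar>\<alpha> m n t\<bar> \<le> \<Lambda> m"
  proof -
    fix m n assume n: "n \<in> {1..N}"
    have "Linf_norm I (\<alpha> m n) \<le> ereal (\<Lambda> m)"
      unfolding Lambda_def I_def by (rule Max_ge) (use n in auto)
    then have le: "esssup M (\<lambda>t. ereal \<bar>\<alpha> m n t\<bar>) \<le> ereal (\<Lambda> m)"
      by (simp add: Linf_norm_def M_def)
    have "AE t in M. ereal \<bar>\<alpha> m n t\<bar> \<le> esssup M (\<lambda>t. ereal \<bar>\<alpha> m n t\<bar>)"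
      by (rule esssup_AE)
    then show "AE t in M. \<bar>\<alpha> m n t\<bar> \<le> \<Lambda> m"
    proof eventually_elim
      case (elim t)
      then have "ereal \<bar>\<alpha> m n t\<bar> \<le> ereal (\<Lambda> m)" using le order_trans by blast
      then show ?case by simp
    qed
  qed
  have one: "1 \<in> {1..N}" using part by (simp add: is_partition_def)
  have D: "x 0 < x N" using part_mono[OF part, of 0 N] part by (auto simp: is_partition_def)
  have Lpos: "\<And>m. 0 \<le> \<Lambda> m"
  proof (rule ccontr)
    fix m assume neg: "\<not> 0 \<le> \<Lambda> m"
    have "AE t in M. False" using AEb[OF one, of m]
    proof eventually_elim
      case (elim t)
      then show ?case using neg by simp
    qed
    then have "emeasure M (space M) = 0" using ae_filter_eq_bot_iff eventually_False by metis
    moreover have "emeasure M (space M) = ennreal (x N - x 0)"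
      using D by (simp add: M_def I_def Ival_def emeasure_restrict_space space_restrict_space)
    ultimately show False using D by simp
  qed
  have dbound: "\<And>m. (\<integral>t. (g m t - f m t)\<^sup>2 \<partial>M) \<le> c m"
  proof -
    fix m
    define sD where "sD = sqrt (\<integral>t. (g m t - f m t)\<^sup>2 \<partial>M)"
    define sG where "sG = sqrt (\<integral>t. (g m t)\<^sup>2 \<partial>M)"
    define sF where "sF = sqrt (\<integral>t. (f m t)\<^sup>2 \<partial>M)"
    have k: "(\<integral>t. (g m t - f m t)\<^sup>2 \<partial>M) \<le> (\<Lambda> m)\<^sup>2 * (\<integral>t. (g m t)\<^sup>2 \<partial>M)"
      unfolding M_def I_def
      by (rule key[OF part alpha_meas AEb[unfolded M_def I_def]]) (use fsq conv in \<open>auto simp: I_def\<close>)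
    then have "sD \<le> sqrt ((\<Lambda> m)\<^sup>2 * (\<integral>t. (g m t)\<^sup>2 \<partial>M))" unfolding sD_def
      using real_sqrt_le_mono by blast
    also have "\<dots> = \<Lambda> m * sG" using Lpos[of m] by (simp add: real_sqrt_mult sG_def)
    finally have d1: "sD \<le> \<Lambda> m * sG" .
    have d2: "sG \<le> sF + sD" unfolding sG_def sF_def sD_def by (rule mink_int[OF Fm Gm Fi Gi])
    have "sD * (1 - \<Lambda> m) \<le> \<Lambda> m * sF"
      using d1 mult_left_mono[OF d2 Lpos[of m]] by (simp add: algebra_simps)
    then have "sD \<le> \<Lambda> m / (1 - \<Lambda> m) * sF"
      using Lambda_lt1[of m] by (simp add: field_simps)
    moreover have "0 \<le> sD" by (simp add: sD_def)
    ultimately have "sD\<^sup>2 \<le> (\<Lambda> m / (1 - \<Lambda> m) * sF)\<^sup>2" by (rule power_mono)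
    moreover have "sD\<^sup>2 = (\<integral>t. (g m t - f m t)\<^sup>2 \<partial>M)" by (simp add: sD_def)
    moreover have "L2_norm I (f m) = sF" by (simp add: L2_norm_def sF_def M_def)
    moreover have "(\<Lambda> m / (1 - \<Lambda> m) * sF)\<^sup>2 = (\<Lambda> m / (1 - \<Lambda> m))\<^sup>2 * sF\<^sup>2"
      by (rule power_mult_distrib)
    ultimately show "(\<integral>t. (g m t - f m t)\<^sup>2 \<partial>M) \<le> c m" unfolding c_def by metis
  qed
  have c0: "\<And>m. 0 \<le> c m" by (simp add: c_def)
  show ?thesis
    unfolding is_frame_def I_def[symmetric] R_def[symmetric] c_def[symmetric]
  proof (intro conjI allI impI)
    show "0 < A * (1 - sqrt (R / A))\<^sup>2"
    proof -
      have "R / A < 1" using RA Ap by simp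
      then have "sqrt (R / A) < 1" by simp
      then show ?thesis using Ap by simp
    qed
    show "0 < B * (1 + sqrt (R / B))\<^sup>2"
    proof -
      have "0 \<le> R" unfolding R_def using c0 sc by (simp add: suminf_nonneg)
      then have "0 \<le> sqrt (R / B)" using Bp by simp
      then have "0 < 1 + sqrt (R / B)" by linarith
      then have "0 < (1 + sqrt (R / B))\<^sup>2" by simp
      then show ?thesis using Bp by simp
    qed
    show "\<And>m. sq_int I (g m)" by (rule gsq)
    fix h assume h: "sq_int I h"
    have hm: "h \<in> borel_measurable M" and hi: "integrable M (\<lambda>t. (h t)\<^sup>2)"
      using h by (auto simp: sq_int_def M_def)
    define H where "H = (\<integral>t. (h t)\<^sup>2 \<partial>M)"
    have H0: "0 \<le> H" by (simp add: H_def)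
    have HL: "(L2_norm I h)\<^sup>2 = H" using H0 by (simp add: L2_norm_def H_def M_def)
    define a where "a m = L2_inner I h (f m)" for m
    define b where "b m = (\<integral>t. h t * (g m t - f m t) \<partial>M)" for m
    have DmM: "\<And>m. (\<lambda>t. g m t - f m t) \<in> borel_measurable M" using Fm Gm by simp
    have DiM: "\<And>m. integrable M (\<lambda>t. (g m t - f m t)\<^sup>2)" by (rule sq_diff_int[OF Gm Fm Gi Fi])
    have ab: "\<And>m. L2_inner I h (g m) = a m + b m"
    proof -
      fix m
      have i1: "integrable M (\<lambda>t. h t * f m t)" by (rule sq_prod_int[OF hm Fm hi Fi])
      have i2: "integrable M (\<lambda>t. h t * (g m t - f m t))" by (rule sq_prod_int[OF hm DmM hi DiM])
      have "(\<lambda>t. h t * g m t) = (\<lambda>t. h t * f m t + h t * (g m t - f m t))" by (auto simp: algebra_simps)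
      then show "L2_inner I h (g m) = a m + b m"
        using i1 i2 by (simp add: L2_inner_def a_def b_def M_def)
    qed
    have bc: "\<And>m. (b m)\<^sup>2 \<le> H * c m"
    proof -
      fix m
      have "(b m)\<^sup>2 \<le> H * (\<integral>t. (g m t - f m t)\<^sup>2 \<partial>M)"
        unfolding b_def H_def by (rule CS_int[OF hm DmM hi DiM])
      also have "\<dots> \<le> H * c m" using dbound H0 by (intro mult_left_mono)
      finally show "(b m)\<^sup>2 \<le> H * c m" .
    qed
    have F: "summable (\<lambda>m. (a m)\<^sup>2) \<and> A * H \<le> (\<Sum>m. (a m)\<^sup>2) \<and> (\<Sum>m. (a m)\<^sup>2) \<le> B * H"
      using fr[OF h] HL by (simp add: a_def)
    have res: "summable (\<lambda>m. (a m + b m)\<^sup>2) \<and>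
     A * (1 - sqrt (R / A))\<^sup>2 * H \<le> (\<Sum>m. (a m + b m)\<^sup>2) \<and>
     (\<Sum>m. (a m + b m)\<^sup>2) \<le> B * (1 + sqrt (R / B))\<^sup>2 * H"
      by (rule seq_frame[where a=a and b=b and c=c and A=A and B=B and H=H and R=R])
         (use F sc bc c0 RA Ap Bp H0 in \<open>auto simp: R_def\<close>)
    show "summable (\<lambda>m. (L2_inner I h (g m))\<^sup>2)" using res by (simp add: ab)
    show "A * (1 - sqrt (R / A))\<^sup>2 * (L2_norm I h)\<^sup>2 \<le> (\<Sum>m. (L2_inner I h (g m))\<^sup>2)"
      using res by (simp add: ab HL)
    show "(\<Sum>m. (L2_inner I h (g m))\<^sup>2) \<le> B * (1 + sqrt (R / B))\<^sup>2 * (L2_norm I h)\<^sup>2"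
      using res by (simp add: ab HL)
  qed
qed

end
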